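(* Let $\varphi:\mathrm{WCQSym}\to\mathrm{QSym}$ be the $\mathbf k$-linear map with $\varphi(M_\alpha)=(-1)^{\ell_\varepsilon(\alpha)}M_{\bar\alpha}$ for $\alpha\in\mathcal C_N$ and $\varphi(M_\alpha)=0$ for $\alpha\in\mathcal C_\varepsilon$. Let $B_\varepsilon=\{M_\alpha:\alpha\in\mathcal C_\varepsilon\}$ and $B_N=\{M_\alpha+(-1)^{\ell_\varepsilon(\alpha)+1}M_{\bar\alpha}:\alpha\in\mathcal C_N\setminus\mathcal C(\mathbb N)\}$. Then the disjoint union $B_\varepsilon\uplus B_N$ is a basis of the free $\mathbf k$-module $\ker\varphi$.
   Context: $\mathbf{k}$ is a commutative ring containing $\mathbb{Q}$. $\tilde{\mathbb N}=\mathbb N\cup\{\varepsilon\}$ with $0+\varepsilon=\varepsilon+\varepsilon=\varepsilon$ and $n+\varepsilon=n$ for integers $n\ge1$. $\mathbf{k}[[X]]_{\tilde{\mathbb N}}$, $X=\{x_1<x_2<\cdots\}$, is the algebra of possibly infinite linear combinations of formal monomials $\prod x_i^{f(x_i)}$, $f$ finitely supported $\tilde{\mathbb N}$-valued, multiplied by adding exponents in $\tilde{\mathbb N}$. An $\tilde{\mathbb N}$-composition is a finite (possibly empty) sequence $\alpha=(\alpha_1,\dots,\alpha_k)$ of elements of $\{\varepsilon,1,2,\dots\}$; $M_\alpha=\sum_{1\le i_1<\cdots<i_k}x_{i_1}^{\alpha_1}\cdots x_{i_k}^{\alpha_k}$, $M_\emptyset=1$. $\mathrm{WCQSym}$ is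 the $\mathbf k$-span of the (linearly independent) $M_\alpha$. $\mathcal C(\mathbb N)$ is the set of $\tilde{\mathbb N}$-compositions all of whose entries are positive integers, and $\mathrm{QSym}$ is the span of $M_\alpha$, $\alpha\in\mathcal C(\mathbb N)$. $\ell_\varepsilon(\alpha)$ is the number of entries of $\alpha$ equal to $\varepsilon$; $\bar\alpha$ is $\alpha$ with its $\varepsilon$ entries deleted. $\mathcal C_\varepsilon$ is the set of $\tilde{\mathbb N}$-compositions with first entry $\varepsilon$; $\mathcal C_N$ is the set of all others (including the empty one). *)

theory Defs
  imports Main "HOL.Modules" "HOL-Library.Poly_Mapping"
begin

text \<open>Entries of an N-tilde-composition: the symbol epsilon, or a positive integer
  (represented by the type num of positive binary numerals).\<close>
datatype wentry = Eps | Pos num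

type_synonym wcomp = "wentry list"

text \<open>Since the M_alpha are linearly independent, WCQSym is the free k-module with basis
  (M_alpha); we represent an element by its finitely supported coefficient function.\<close>
type_synonym 'k wcqsym = "wcomp \<Rightarrow>\<^sub>0 'k"

definition scaleW :: "'k::comm_ring_1 \<Rightarrow> 'k wcqsym \<Rightarrow> 'k wcqsym" where
  "scaleW c p = Poly_Mapping.map (\<lambda>x. c * x) p"

lemma lookup_scaleW: "Poly_Mapping.lookup (scaleW c p) a = c * Poly_Mapping.lookup p a"
  unfolding scaleW_def by (simp add: map.rep_eq when_def)

lemma module_scaleW: "module (scaleW :: 'k::comm_ring_1 \<Rightarrow> 'k wcqsym \<Rightarrow> 'k wcqsym)"
  by unfold_locales
     (auto intro!: poly_mapping_eqI simp: lookup_scaleW lookup_add algebra_simps)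

definition M :: "wcomp \<Rightarrow> 'k::comm_ring_1 wcqsym" where
  "M \<alpha> = Poly_Mapping.single \<alpha> 1"

definition CN_nat :: "wcomp set" where
  "CN_nat = {\<alpha>. Eps \<notin> set \<alpha>}"

definition C_eps :: "wcomp set" where
  "C_eps = {\<alpha>. \<alpha> \<noteq> [] \<and> hd \<alpha> = Eps}"

definition C_N :: "wcomp set" where
  "C_N = - C_eps"

definition ell_eps :: "wcomp \<Rightarrow> nat" where
  "ell_eps \<alpha> = length (filter (\<lambda>x. x = Eps) \<alpha>)"

definition bar :: "wcomp \<Rightarrow> wcomp" where
  "bar \<alpha> = filter (\<lambda>x. x \<noteq> Eps) \<alpha>"

definition phiM :: "wcomp \<Rightarrow> 'k::comm_ring_1 wcqsym" where
  "phiM \<alpha> = (if \<alpha> \<in> C_eps then 0 else scaleW ((-1) ^ ell_eps \<alpha>) (M (bar \<alpha>)))"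

definition phi :: "'k::comm_ring_1 wcqsym \<Rightarrow> 'k wcqsym" where
  "phi p = (\<Sum>\<alpha>\<in>Poly_Mapping.keys p. scaleW (Poly_Mapping.lookup p \<alpha>) (phiM \<alpha>))"

definition QSym :: "'k::comm_ring_1 wcqsym set" where
  "QSym = module.span scaleW (M ` CN_nat)"

definition bN :: "wcomp \<Rightarrow> 'k::comm_ring_1 wcqsym" where
  "bN \<alpha> = M \<alpha> + scaleW ((-1) ^ (ell_eps \<alpha> + 1)) (M (bar \<alpha>))"

definition B_eps :: "'k::comm_ring_1 wcqsym set" where
  "B_eps = M ` C_eps"

definition B_N :: "'k::comm_ring_1 wcqsym set" where
  "B_N = bN ` (C_N - CN_nat)"

end

theory Submission
  imports Defs
begin

interpretation W: module "scaleW :: 'k::comm_ring_1 \<Rightarrow> 'k wcqsym \<Rightarrow> 'k wcqsym"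
  by (rule module_scaleW)

lemma lookup_M: "Poly_Mapping.lookup (M \<gamma> :: 'k::comm_ring_1 wcqsym) \<kappa> = (if \<gamma> = \<kappa> then 1 else 0)"
  by (simp add: M_def lookup_single when_def)

lemma bar_CN: "bar \<alpha> \<in> CN_nat"
  by (simp add: bar_def CN_nat_def)

lemma C_eps_notCN: "\<alpha> \<in> C_eps \<Longrightarrow> \<alpha> \<notin> CN_nat"
  by (cases \<alpha>) (auto simp: C_eps_def CN_nat_def)

lemma lookup_bN_off: "\<kappa> \<notin> CN_nat \<Longrightarrow>
  Poly_Mapping.lookup (bN \<alpha> :: 'k::comm_ring_1 wcqsym) \<kappa> = (if \<alpha> = \<kappa> then 1 else 0)"
  using bar_CN[of \<alpha>] by (auto simp: bN_def lookup_add lookup_minus lookup_scaleW lookup_M)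

definition keyprop :: "'k::comm_ring_1 wcqsym \<Rightarrow> wcomp \<Rightarrow> bool" where
  "keyprop v \<kappa> \<longleftrightarrow> \<kappa> \<notin> CN_nat \<and>
     (\<forall>\<xi>. \<xi> \<notin> CN_nat \<longrightarrow> Poly_Mapping.lookup v \<xi> = (if \<xi> = \<kappa> then 1 else 0))"

definition bb :: "wcomp \<Rightarrow> 'k::comm_ring_1 wcqsym" where
  "bb \<kappa> = (if \<kappa> \<in> C_eps then M \<kappa> else bN \<kappa>)"

lemma keyprop_bb: "\<kappa> \<notin> CN_nat \<Longrightarrow> keyprop (bb \<kappa>) \<kappa>"
  by (auto simp: keyprop_def bb_def lookup_M lookup_bN_off)

lemma keyprop_unique: "keyprop v \<kappa> \<Longrightarrow> keyprop v \<kappa>' \<Longrightarrow> \<kappa> = \<kappa>'"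
  unfolding keyprop_def by (metis one_neq_zero)

lemma S_bb: "v \<in> B_eps \<union> B_N \<Longrightarrow> \<exists>\<kappa>. \<kappa> \<notin> CN_nat \<and> v = bb \<kappa>"
  by (auto simp: B_eps_def B_N_def bb_def C_eps_notCN C_N_def)

lemma bb_S: "\<kappa> \<notin> CN_nat \<Longrightarrow> (bb \<kappa> :: 'k::comm_ring_1 wcqsym) \<in> B_eps \<union> B_N"
  by (auto simp: B_eps_def B_N_def bb_def C_N_def)

lemma bb_inj: "\<kappa> \<notin> CN_nat \<Longrightarrow> \<kappa>' \<notin> CN_nat \<Longrightarrow> (bb \<kappa> :: 'k::comm_ring_1 wcqsym) = bb \<kappa>' \<Longrightarrow> \<kappa> = \<kappa>'"
  by (metis keyprop_bb keyprop_unique)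

lemma phi_superset:
  assumes "finite A" "Poly_Mapping.keys p \<subseteq> A"
  shows "phi p = (\<Sum>\<alpha>\<in>A. scaleW (Poly_Mapping.lookup p \<alpha>) (phiM \<alpha>))"
  unfolding phi_def
  by (rule sum.mono_neutral_left) (use assms in \<open>auto simp: in_keys_iff\<close>)

lemma phi_add: "phi (p + q) = phi p + phi (q :: 'k::comm_ring_1 wcqsym)"
proof -
  let ?A = "Poly_Mapping.keys p \<union> Poly_Mapping.keys q"
  have "phi (p + q) = (\<Sum>\<alpha>\<in>?A. scaleW (Poly_Mapping.lookup (p+q) \<alpha>) (phiM \<alpha>))"
    by (rule phi_superset) (auto simp: keys_add)
  also have "\<dots> = phi p + phi q"
    by (simp add: phi_superset[of ?A p] phi_superset[of ?A q] lookup_add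
        W.scale_left_distrib sum.distrib)
  finally show ?thesis .
qed

lemma phi_diff: "phi (p - q) = phi p - phi (q :: 'k::comm_ring_1 wcqsym)"
  by (metis phi_add diff_add_cancel eq_diff_eq)

lemma phi_scale: "phi (scaleW c p) = scaleW c (phi (p :: 'k::comm_ring_1 wcqsym))"
proof -
  have "phi (scaleW c p) = (\<Sum>\<alpha>\<in>Poly_Mapping.keys p. scaleW (Poly_Mapping.lookup (scaleW c p) \<alpha>) (phiM \<alpha>))"
    by (rule phi_superset) (auto simp: in_keys_iff lookup_scaleW)
  then show ?thesis
    by (simp add: phi_def W.scale_sum_right lookup_scaleW)
qed

lemma phi_zero: "phi 0 = 0"
  by (simp add: phi_def)

lemma phi_M: "phi (M \<gamma> :: 'k::comm_ring_1 wcqsym) = phiM \<gamma>"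
  by (subst phi_superset[of "{\<gamma>}"]) (auto simp: M_def)

lemma phi_bN: "\<alpha> \<in> C_N \<Longrightarrow> phi (bN \<alpha> :: 'k::comm_ring_1 wcqsym) = 0"
proof -
  assume a: "\<alpha> \<in> C_N"
  have nb: "bar \<alpha> \<notin> C_eps" using bar_CN[of \<alpha>] C_eps_notCN by blast
  have e0: "ell_eps (bar \<alpha>) = 0" by (simp add: ell_eps_def bar_def filter_filter)
  have bb': "bar (bar \<alpha>) = bar \<alpha>" by (simp add: bar_def)
  show ?thesis
    using a nb unfolding bN_def
    by (auto simp: phi_add phi_diff phi_scale phi_M phiM_def C_N_def e0 bb'
        intro!: poly_mapping_eqI simp: lookup_add lookup_minus lookup_scaleW)
qed

lemma phi_id: "Poly_Mapping.keys q \<subseteq> CN_nat \<Longrightarrow> phi q = (q :: 'k::comm_ring_1 wcqsym)"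
proof -
  assume k: "Poly_Mapping.keys q \<subseteq> CN_nat"
  have pm: "\<alpha> \<in> CN_nat \<Longrightarrow> phiM \<alpha> = (M \<alpha> :: 'k wcqsym)" for \<alpha>
  proof -
    assume a: "\<alpha> \<in> CN_nat"
    then have 1: "filter (\<lambda>x. x = Eps) \<alpha> = []" "filter (\<lambda>x. x \<noteq> Eps) \<alpha> = \<alpha>"
      by (auto simp: CN_nat_def filter_empty_conv filter_id_conv)
    show ?thesis using a C_eps_notCN[of \<alpha>]
      by (auto simp: phiM_def ell_eps_def bar_def 1
        intro!: poly_mapping_eqI simp: lookup_scaleW)
  qed
  have "phi q = (\<Sum>\<alpha>\<in>Poly_Mapping.keys q. scaleW (Poly_Mapping.lookup q \<alpha>) (M \<alpha>))"
    unfolding phi_def using k pm by (intro sum.cong) auto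
  also have "\<dots> = q"
    by (rule poly_mapping_eqI)
       (auto simp: lookup_sum lookup_scaleW lookup_M if_distrib[of "\<lambda>x. _ * x"] cong: if_cong
         simp: in_keys_iff)
  finally show ?thesis .
qed

lemma lookup_bb_off: "\<kappa> \<notin> CN_nat \<Longrightarrow> \<xi> \<notin> CN_nat \<Longrightarrow>
   Poly_Mapping.lookup (bb \<kappa> :: 'k::comm_ring_1 wcqsym) \<xi> = (if \<kappa> = \<xi> then 1 else 0)"
  using keyprop_bb[of \<kappa>] unfolding keyprop_def by auto

lemma indep: "module.independent scaleW (B_eps \<union> (B_N :: 'k::comm_ring_1 wcqsym set))"
proof
  assume "W.dependent (B_eps \<union> (B_N :: 'k::comm_ring_1 wcqsym set))"
  then obtain t u v0 where t: "finite t" "t \<subseteq> B_eps \<union> (B_N :: 'k wcqsym set)"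
    and s: "(\<Sum>v\<in>t. scaleW (u v) v) = 0" and v0: "v0 \<in> t" "u v0 \<noteq> 0"
    unfolding W.dependent_explicit by blast
  obtain \<kappa> where k: "\<kappa> \<notin> CN_nat" "v0 = bb \<kappa>" using S_bb v0 t by blast
  have "Poly_Mapping.lookup (\<Sum>v\<in>t. scaleW (u v) v) \<kappa> = (\<Sum>v\<in>t. if v = v0 then u v else 0)"
    unfolding lookup_sum lookup_scaleW
  proof (rule sum.cong)
    fix v assume "v \<in> t"
    then obtain \<kappa>' where k': "\<kappa>' \<notin> CN_nat" "v = bb \<kappa>'" using S_bb t by blast
    show "u v * Poly_Mapping.lookup v \<kappa> = (if v = v0 then u v else 0)"
      using k k' bb_inj[of \<kappa>' \<kappa>] by (auto simp: lookup_bb_off)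
  qed simp
  also have "\<dots> = u v0" using v0 t by simp
  finally show False using s v0 by simp
qed

lemma span_eq: "module.span scaleW (B_eps \<union> (B_N :: 'k::comm_ring_1 wcqsym set)) = {p. phi p = 0}"
proof
  have "subspace_ok": "W.subspace {p :: 'k wcqsym. phi p = 0}"
    by (auto simp: W.subspace_def phi_zero phi_add phi_scale)
  have "B_eps \<union> (B_N :: 'k wcqsym set) \<subseteq> {p. phi p = 0}"
    by (auto simp: B_eps_def B_N_def phi_M phiM_def phi_bN)
  then show "W.span (B_eps \<union> (B_N :: 'k wcqsym set)) \<subseteq> {p. phi p = 0}"
    using W.span_minimal subspace_ok by blast
  show "{p. phi p = 0} \<subseteq> W.span (B_eps \<union> (B_N :: 'k wcqsym set))"
  proof
    fix p :: "'k wcqsym" assume "p \<in> {p. phi p = 0}"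
    then have p0: "phi p = 0" by simp
    define s where "s = (\<Sum>\<alpha>\<in>Poly_Mapping.keys p - CN_nat. scaleW (Poly_Mapping.lookup p \<alpha>) (bb \<alpha> :: 'k wcqsym))"
    have sS: "s \<in> W.span (B_eps \<union> B_N)"
      unfolding s_def by (intro W.span_sum W.span_scale W.span_base bb_S) auto
    have "W.span (B_eps \<union> (B_N :: 'k wcqsym set)) \<subseteq> {p. phi p = 0}"
      using W.span_minimal subspace_ok
        \<open>B_eps \<union> (B_N :: 'k wcqsym set) \<subseteq> {p. phi p = 0}\<close> by blast
    with sS have ps: "phi s = 0" by blast
    have ls: "Poly_Mapping.lookup s \<xi> = Poly_Mapping.lookup p \<xi>" if "\<xi> \<notin> CN_nat" for \<xi>
    proof -
      have "Poly_Mapping.lookup s \<xi> = (\<Sum>\<alpha>\<in>Poly_Mapping.keys p - CN_nat. if \<alpha> = \<xi> then Poly_Mapping.lookup p \<alpha> else 0)"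
        unfolding s_def lookup_sum lookup_scaleW
        by (rule sum.cong) (use that in \<open>auto simp: lookup_bb_off\<close>)
      also have "\<dots> = Poly_Mapping.lookup p \<xi>"
        using that by (simp add: in_keys_iff)
      finally show ?thesis .
    qed
    have "Poly_Mapping.keys (p - s) \<subseteq> CN_nat"
      using ls by (force simp: in_keys_iff lookup_minus)
    then have "p - s = phi (p - s)" by (simp add: phi_id)
    also have "\<dots> = 0" by (simp add: phi_diff p0 ps)
    finally have "p = s" by simp
    with sS show "p \<in> W.span (B_eps \<union> B_N)" by simp
  qed
qed

theorem theorem3p9:
  fixes dummy :: "'k::comm_ring_1"
  assumes Q_sub_k: "\<And>n::nat. n > 0 \<Longrightarrow> \<exists>r::'k. of_nat n * r = 1"
  shows "inj_on (M :: wcomp \<Rightarrow> 'k wcqsym) C_eps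
       \<and> inj_on (bN :: wcomp \<Rightarrow> 'k wcqsym) (C_N - CN_nat)
       \<and> (B_eps :: 'k wcqsym set) \<inter> B_N = {}
       \<and> module.independent scaleW (B_eps \<union> (B_N :: 'k wcqsym set))
       \<and> module.span scaleW (B_eps \<union> (B_N :: 'k wcqsym set)) = {p. phi p = 0}"
proof (intro conjI)
  show "inj_on (M :: wcomp \<Rightarrow> 'k wcqsym) C_eps"
    by (rule inj_onI) (metis lookup_M one_neq_zero)
  show "inj_on (bN :: wcomp \<Rightarrow> 'k wcqsym) (C_N - CN_nat)"
  proof (rule inj_onI)
    fix x y assume xy: "x \<in> C_N - CN_nat" "y \<in> C_N - CN_nat" "(bN x :: 'k wcqsym) = bN y"
    then have "(bb x :: 'k wcqsym) = bb y" by (auto simp: bb_def C_N_def)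
    with xy show "x = y" using bb_inj by blast
  qed
  show "(B_eps :: 'k wcqsym set) \<inter> B_N = {}"
  proof (rule ccontr)
    assume "(B_eps :: 'k wcqsym set) \<inter> B_N \<noteq> {}"
    then obtain \<gamma> \<alpha> where g: "\<gamma> \<in> C_eps" "\<alpha> \<in> C_N - CN_nat" "(M \<gamma> :: 'k wcqsym) = bN \<alpha>"
      by (auto simp: B_eps_def B_N_def)
    then have "(bb \<gamma> :: 'k wcqsym) = bb \<alpha>" by (auto simp: bb_def C_N_def)
    with g have "\<gamma> = \<alpha>" using bb_inj C_eps_notCN by blast
    with g show False by (simp add: C_N_def)
  qed
  show "module.independent scaleW (B_eps \<union> (B_N :: 'k wcqsym set))" by (rule indep)
  show "module.span scaleW (B_eps \<union> (B_N :: 'k wcqsym set)) = {p. phi p = 0}" by (rule span_eq)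
qed

end
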